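(* Let $(\alpha_n)_{n\ge0}$ be complex numbers with $0<|\alpha_n|<1$ for all $n$. For all nonnegative integers $n,r,s$, \[ \sum_{p\in\mathrm{Sch}_{n,r,s}}\mathrm{wt}_S(p)=\sum_{q\in\mathfrak{L}_{n,r,s}}\mathrm{wt}_L(q). \]
   Context: Set $\alpha_{-1}=-1$. A Łukasiewicz path is a lattice path in $\mathbb{Z}\times\mathbb{Z}_{\ge0}$ with steps $(1,k)$, $k\le1$ an integer; $\mathfrak{L}_{n,r,s}$ is the set of such paths from $(0,r)$ to $(n,s)$. $\mathrm{wt}_L$ is the product of step weights, where $(a,b)\to(a+1,b+1)$ has weight $1$ and $(a,b)\to(a+1,b-k)$, $k=0,\dots,b$, has weight $-\alpha_b\overline{\alpha_{b-k-1}}\prod_{j=b-k}^{b-1}(1-|\alpha_j|^2)$ (empty product $1$). A Schröder path is a lattice path in $\mathbb{Z}\times\mathbb{Z}_{\ge0}$ with steps $(1,1)$, $(1,0)$, $(0,-1)$; $\mathrm{Sch}_{n,r,s}$ is the set of Schröder paths from $(0,r)$ to $(n,s)$ not starting with a step $(0,-1)$. $\mathrm{wt}_S$ is the product of step weights: $(a,b)\to(a+1,b+1)$ weight $1$; $(a,b)\to(a+1,b)$ weight $-\overline{\alpha_{b-1}}/\overline{\alpha_b}$; $(a,b)\to(a,b-1)$ weight $\frac{\overline{\alpha_{b-2}}}{\overline{\alpha_{b-1}}}(1-|\alpha_{b-1}|^2)$. *)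

theory Defs
  imports Complex_Main
begin

definition aext :: "(nat \<Rightarrow> complex) \<Rightarrow> int \<Rightarrow> complex" where
  "aext a j = (if j = -1 then -1 else a (nat j))"

text \<open>A Lukasiewicz path from (0,r) to (n,s) is represented by its list of heights
  [h_0,...,h_n] (heights are nat, so the path stays in the upper half plane);
  consecutive heights satisfy h_{i+1} <= h_i + 1.\<close>
definition luk_paths :: "nat \<Rightarrow> nat \<Rightarrow> nat \<Rightarrow> nat list set" where
  "luk_paths n r s = {hs. length hs = Suc n \<and> hs ! 0 = r \<and> hs ! n = s \<and>
      (\<forall>i<n. hs ! Suc i \<le> Suc (hs ! i))}"

definition luk_step_wt :: "(nat \<Rightarrow> complex) \<Rightarrow> nat \<Rightarrow> nat \<Rightarrow> complex" where
  "luk_step_wt a b b' = (if b' = Suc b then 1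
     else - aext a (int b) * cnj (aext a (int b' - 1)) *
          (\<Prod>j\<in>{b'..<b}. 1 - complex_of_real ((cmod (a j))\<^sup>2)))"

definition luk_wt :: "(nat \<Rightarrow> complex) \<Rightarrow> nat list \<Rightarrow> complex" where
  "luk_wt a hs = (\<Prod>i<length hs - 1. luk_step_wt a (hs ! i) (hs ! Suc i))"

text \<open>Steps: U = (1,1), H = (1,0), D = (0,-1). A path is a step list together
  with its starting height.\<close>
datatype sstep = U | H | D

primrec sch_valid :: "nat \<Rightarrow> sstep list \<Rightarrow> bool" where
  "sch_valid b [] = True"
| "sch_valid b (x # xs) = (case x of U \<Rightarrow> sch_valid (Suc b) xs
      | H \<Rightarrow> sch_valid b xs | D \<Rightarrow> (0 < b \<and> sch_valid (b - 1) xs))"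

primrec sch_end :: "nat \<Rightarrow> sstep list \<Rightarrow> nat" where
  "sch_end b [] = b"
| "sch_end b (x # xs) = (case x of U \<Rightarrow> sch_end (Suc b) xs
      | H \<Rightarrow> sch_end b xs | D \<Rightarrow> sch_end (b - 1) xs)"

definition sch_paths :: "nat \<Rightarrow> nat \<Rightarrow> nat \<Rightarrow> sstep list set" where
  "sch_paths n r s = {p. sch_valid r p \<and> sch_end r p = s \<and>
      length (filter (\<lambda>x. x \<noteq> D) p) = n \<and> (p \<noteq> [] \<longrightarrow> hd p \<noteq> D)}"

primrec sch_wt :: "(nat \<Rightarrow> complex) \<Rightarrow> nat \<Rightarrow> sstep list \<Rightarrow> complex" where
  "sch_wt a b [] = 1"
| "sch_wt a b (x # xs) = (case x of
      U \<Rightarrow> sch_wt a (Suc b) xs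
    | H \<Rightarrow> (- cnj (aext a (int b - 1)) / cnj (aext a (int b))) * sch_wt a b xs
    | D \<Rightarrow> (cnj (aext a (int b - 2)) / cnj (aext a (int b - 1)) *
            (1 - complex_of_real ((cmod (aext a (int b - 1)))\<^sup>2))) * sch_wt a (b - 1) xs)"

end

theory Submission
  imports Defs
begin

definition SA :: "nat \<Rightarrow> nat \<Rightarrow> nat \<Rightarrow> sstep list set" where
  "SA n b s = {p. sch_valid b p \<and> sch_end b p = s \<and> length (filter (\<lambda>x. x \<noteq> D) p) = n}"

lemma sch_paths_SA: "sch_paths n b s = {p \<in> SA n b s. p \<noteq> [] \<longrightarrow> hd p \<noteq> D}"
  unfolding sch_paths_def SA_def by auto

lemma SA_Suc: "SA n (Suc b) s = sch_paths n (Suc b) s \<union> Cons D ` SA n b s"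
proof (intro set_eqI iffI)
  fix p assume "p \<in> SA n (Suc b) s"
  then show "p \<in> sch_paths n (Suc b) s \<union> Cons D ` SA n b s"
    by (cases p) (auto simp: sch_paths_SA SA_def)
next
  fix p assume "p \<in> sch_paths n (Suc b) s \<union> Cons D ` SA n b s"
  then show "p \<in> SA n (Suc b) s"
    by (auto simp: sch_paths_SA SA_def)
qed

lemma SA_0: "SA n 0 s = sch_paths n 0 s"
proof (intro set_eqI iffI)
  fix p assume "p \<in> SA n 0 s"
  then show "p \<in> sch_paths n 0 s"
    by (cases p) (auto simp: sch_paths_SA SA_def split: sstep.splits)
qed (auto simp: sch_paths_SA)

lemma sch_paths_Suc: "sch_paths (Suc n) b s = Cons U ` SA n (Suc b) s \<union> Cons H ` SA n b s"
proof (intro set_eqI iffI)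
  fix p assume "p \<in> sch_paths (Suc n) b s"
  then show "p \<in> Cons U ` SA n (Suc b) s \<union> Cons H ` SA n b s"
    by (cases p) (auto simp: sch_paths_SA SA_def split: sstep.splits)
qed (auto simp: sch_paths_SA SA_def)

lemma sch_paths_0: "sch_paths 0 b s = (if b = s then {[]} else {})"
proof -
  have *: "p = []" if "p \<in> sch_paths 0 b s" for p
  proof (cases p)
    case (Cons x xs)
    with that have "filter (\<lambda>x. x \<noteq> D) (x#xs) = []" "x \<noteq> D"
      by (auto simp: sch_paths_def)
    then show ?thesis by simp
  qed
  show ?thesis
  proof (cases "b = s")
    case True
    have e: "[] \<in> sch_paths 0 b s" using True by (simp add: sch_paths_def)
    have "sch_paths 0 b s = {[]}"
    proof (rule set_eqI)
      fix p show "p \<in> sch_paths 0 b s \<longleftrightarrow> p \<in> {[]}" using *[of p] e by auto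
    qed
    then show ?thesis using True by simp
  next
    case False
    have e: "[] \<notin> sch_paths 0 b s" using False by (simp add: sch_paths_def)
    have "sch_paths 0 b s = {}"
    proof (rule set_eqI)
      fix p show "p \<in> sch_paths 0 b s \<longleftrightarrow> p \<in> {}" using *[of p] e by auto
    qed
    then show ?thesis using False by simp
  qed
qed

lemma finite_SA: "finite (SA n b s)"
proof (induction n arbitrary: b)
  case 0
  show ?case
  proof (induction b)
    case 0 then show ?case by (simp add: SA_0 sch_paths_0)
  next
    case (Suc b) then show ?case by (simp add: SA_Suc sch_paths_0)
  qed
next
  case (Suc n)
  have IH: "finite (SA n c s)" for c by (rule Suc.IH)
  show ?case
  proof (induction b)
    case 0 then show ?case unfolding SA_0[of "Suc n"] sch_paths_Suc using IH by simp
  next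
    case (Suc b) then show ?case unfolding SA_Suc[of "Suc n"] sch_paths_Suc using IH by simp
  qed
qed

lemma finite_sch_paths: "finite (sch_paths n b s)"
  using finite_SA[of n b s] by (simp add: sch_paths_SA)

lemma luk_paths_0: "luk_paths 0 b s = (if b = s then {[b]} else {})"
  by (auto simp: luk_paths_def length_Suc_conv)

lemma luk_paths_Suc:
  "luk_paths (Suc n) b s = (\<lambda>(c,hs). b # hs) ` (SIGMA c:{..Suc b}. luk_paths n c s)"
proof (intro set_eqI iffI)
  fix hs assume h: "hs \<in> luk_paths (Suc n) b s"
  then obtain x t where ht: "hs = x # t" by (cases hs) (auto simp: luk_paths_def)
  with h have "x = b" "length t = Suc n" by (auto simp: luk_paths_def)
  with h ht show "hs \<in> (\<lambda>(c,hs). b # hs) ` (SIGMA c:{..Suc b}. luk_paths n c s)"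
    apply (simp add: luk_paths_def All_less_Suc2 image_iff)
    done
next
  fix hs assume "hs \<in> (\<lambda>(c,hs). b # hs) ` (SIGMA c:{..Suc b}. luk_paths n c s)"
  then show "hs \<in> luk_paths (Suc n) b s"
    by (auto simp: luk_paths_def All_less_Suc2)
qed

lemma finite_luk_paths: "finite (luk_paths n b s)"
  by (induction n arbitrary: b) (auto simp: luk_paths_0 luk_paths_Suc)

lemma luk_wt_Cons: assumes "t \<noteq> []" shows "luk_wt a (b # t) = luk_step_wt a b (t ! 0) * luk_wt a t"
proof -
  obtain m where m: "length t = Suc m" using assms by (cases t) auto
  show ?thesis unfolding luk_wt_def using m
    by (simp add: prod.lessThan_Suc_shift del: prod.lessThan_Suc)
qed

lemma luk_wt_Cons': "length t = Suc m \<Longrightarrow> luk_wt a (b # t) = luk_step_wt a b (t ! 0) * luk_wt a t"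
  by (rule luk_wt_Cons) auto

definition dw :: "(nat \<Rightarrow> complex) \<Rightarrow> nat \<Rightarrow> complex" where
  "dw a b = cnj (aext a (int b - 2)) / cnj (aext a (int b - 1)) *
            (1 - complex_of_real ((cmod (aext a (int b - 1)))\<^sup>2))"

definition hw :: "(nat \<Rightarrow> complex) \<Rightarrow> nat \<Rightarrow> complex" where
  "hw a b = - cnj (aext a (int b - 1)) / cnj (aext a (int b))"

definition PP :: "(nat \<Rightarrow> complex) \<Rightarrow> nat \<Rightarrow> nat \<Rightarrow> complex" where
  "PP a b c = (\<Prod>j\<in>{c<..b}. dw a j)"

lemma sch_wt_D: "sch_wt a (Suc b) (D # q) = dw a (Suc b) * sch_wt a b q"
  by (simp add: dw_def)

lemma sch_wt_U: "sch_wt a b (U # q) = sch_wt a (Suc b) q"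
  by simp

lemma sch_wt_H: "sch_wt a b (H # q) = hw a b * sch_wt a b q"
  by (simp add: hw_def)

lemma SA_sum_Suc: "(\<Sum>p\<in>SA n (Suc b) s. sch_wt a (Suc b) p) =
   (\<Sum>p\<in>sch_paths n (Suc b) s. sch_wt a (Suc b) p) + dw a (Suc b) * (\<Sum>p\<in>SA n b s. sch_wt a b p)"
proof -
  have disj: "sch_paths n (Suc b) s \<inter> Cons D ` SA n b s = {}"
    by (auto simp: sch_paths_def)
  have "(\<Sum>p\<in>SA n (Suc b) s. sch_wt a (Suc b) p) =
    (\<Sum>p\<in>sch_paths n (Suc b) s. sch_wt a (Suc b) p) + (\<Sum>p\<in>Cons D ` SA n b s. sch_wt a (Suc b) p)"
    unfolding SA_Suc by (rule sum.union_disjoint) (auto simp: finite_sch_paths finite_SA disj)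
  also have "(\<Sum>p\<in>Cons D ` SA n b s. sch_wt a (Suc b) p) = (\<Sum>p\<in>SA n b s. sch_wt a (Suc b) (D # p))"
    by (rule sum.reindex_cong[where l = "Cons D"]) auto
  also have "\<dots> = dw a (Suc b) * (\<Sum>p\<in>SA n b s. sch_wt a b p)"
    by (simp only: sch_wt_D sum_distrib_left)
  finally show ?thesis .
qed

lemma SA_closed: "(\<Sum>p\<in>SA n b s. sch_wt a b p) = (\<Sum>c\<le>b. PP a b c * (\<Sum>p\<in>sch_paths n c s. sch_wt a c p))"
proof (induction b)
  case 0
  then show ?case by (simp add: SA_0 PP_def)
next
  case (Suc b)
  have P1: "PP a (Suc b) (Suc b) = 1" by (simp add: PP_def)
  have P2: "PP a (Suc b) c = dw a (Suc b) * PP a b c" if "c \<le> b" for c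
  proof -
    have "{c<..Suc b} = insert (Suc b) {c<..b}" using that by auto
    then show ?thesis by (simp add: PP_def)
  qed
  show ?case
    by (simp add: SA_sum_Suc Suc.IH P1 P2 sum_distrib_left mult.assoc)
qed

lemma SB_Suc: "(\<Sum>p\<in>sch_paths (Suc n) b s. sch_wt a b p) =
  (\<Sum>p\<in>SA n (Suc b) s. sch_wt a (Suc b) p) + hw a b * (\<Sum>p\<in>SA n b s. sch_wt a b p)"
proof -
  have disj: "Cons U ` SA n (Suc b) s \<inter> Cons H ` SA n b s = {}" by auto
  have "(\<Sum>p\<in>sch_paths (Suc n) b s. sch_wt a b p) =
    (\<Sum>p\<in>Cons U ` SA n (Suc b) s. sch_wt a b p) + (\<Sum>p\<in>Cons H ` SA n b s. sch_wt a b p)"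
    unfolding sch_paths_Suc by (rule sum.union_disjoint) (auto simp: finite_SA disj)
  also have "(\<Sum>p\<in>Cons U ` SA n (Suc b) s. sch_wt a b p) = (\<Sum>p\<in>SA n (Suc b) s. sch_wt a b (U # p))"
    by (rule sum.reindex_cong[where l = "Cons U"]) auto
  also have "(\<Sum>p\<in>Cons H ` SA n b s. sch_wt a b p) = (\<Sum>p\<in>SA n b s. sch_wt a b (H # p))"
    by (rule sum.reindex_cong[where l = "Cons H"]) auto
  finally show ?thesis by (simp only: sch_wt_H sch_wt_U sum_distrib_left)
qed

lemma L_Suc: "(\<Sum>q\<in>luk_paths (Suc n) b s. luk_wt a q) =
   (\<Sum>c\<le>Suc b. luk_step_wt a b c * (\<Sum>q\<in>luk_paths n c s. luk_wt a q))"
proof -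
  have inj: "inj_on (\<lambda>(c,hs). b # hs) (SIGMA c:{..Suc b}. luk_paths n c s)"
    by (auto simp: inj_on_def luk_paths_def)
  have "(\<Sum>q\<in>luk_paths (Suc n) b s. luk_wt a q) =
     (\<Sum>(c,hs)\<in>(SIGMA c:{..Suc b}. luk_paths n c s). luk_wt a (b # hs))"
    unfolding luk_paths_Suc by (subst sum.reindex[OF inj]) (simp add: case_prod_unfold)
  also have "\<dots> = (\<Sum>(c,hs)\<in>(SIGMA c:{..Suc b}. luk_paths n c s). luk_step_wt a b c * luk_wt a hs)"
  proof (rule sum.cong)
    fix x assume "x \<in> (SIGMA c:{..Suc b}. luk_paths n c s)"
    then show "(case x of (c, hs) \<Rightarrow> luk_wt a (b # hs)) = (case x of (c, hs) \<Rightarrow> luk_step_wt a b c * luk_wt a hs)"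
      by (auto simp: luk_wt_Cons' luk_paths_def)
  qed simp
  also have "\<dots> = (\<Sum>c\<le>Suc b. \<Sum>hs\<in>luk_paths n c s. luk_step_wt a b c * luk_wt a hs)"
    by (rule sum.Sigma[symmetric]) (auto simp: finite_luk_paths)
  finally show ?thesis by (simp add: sum_distrib_left)
qed

lemma aext_nat[simp]: "aext a (int b) = a b"
  by (simp add: aext_def)

lemma aext_Suc1[simp]: "aext a (int (Suc b) - 1) = a b"
  by (simp add: aext_def)

lemma aext_Suc2[simp]: "aext a (int (Suc b) - 2) = aext a (int b - 1)"
  by (simp add: algebra_simps)

lemma aext_nz: assumes "\<forall>m. a m \<noteq> 0" shows "aext a (int c - 1) \<noteq> 0"
  using assms by (cases c) (auto simp: aext_def)

lemma PP_closed:
  assumes nz: "\<forall>m. a m \<noteq> 0" and "c \<le> b"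
  shows "PP a b c = cnj (aext a (int c - 1)) / cnj (aext a (int b - 1)) *
           (\<Prod>j\<in>{c..<b}. 1 - complex_of_real ((cmod (a j))\<^sup>2))"
  using assms(2)
proof (induction b rule: dec_induct)
  case base
  then show ?case using aext_nz[OF nz, of c] by (simp add: PP_def)
next
  case (step b)
  have "{c<..Suc b} = insert (Suc b) {c<..b}" using step by auto
  then have "PP a (Suc b) c = dw a (Suc b) * PP a b c" by (simp add: PP_def)
  also have "\<dots> = cnj (aext a (int b - 1)) / cnj (a b) * (1 - complex_of_real ((cmod (a b))\<^sup>2)) *
     (cnj (aext a (int c - 1)) / cnj (aext a (int b - 1)) *
           (\<Prod>j\<in>{c..<b}. 1 - complex_of_real ((cmod (a j))\<^sup>2)))"
    by (simp only: step.IH dw_def aext_Suc1 aext_Suc2)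
  also have "\<dots> = cnj (aext a (int c - 1)) / cnj (a b) *
           ((\<Prod>j\<in>{c..<b}. 1 - complex_of_real ((cmod (a j))\<^sup>2)) * (1 - complex_of_real ((cmod (a b))\<^sup>2)))"
    using aext_nz[OF nz, of b] nz by (simp add: field_simps)
  also have "\<dots> = cnj (aext a (int c - 1)) / cnj (aext a (int (Suc b) - 1)) *
           (\<Prod>j\<in>{c..<Suc b}. 1 - complex_of_real ((cmod (a j))\<^sup>2))"
    using step by (simp add: prod.atLeastLessThan_Suc)
  finally show ?case .
qed

lemma step_eq:
  assumes nz: "\<forall>m. a m \<noteq> 0" and "c \<le> Suc b"
  shows "luk_step_wt a b c = PP a (Suc b) c + (if c \<le> b then hw a b * PP a b c else 0)"
proof (cases "c = Suc b")
  case True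
  then show ?thesis by (simp add: luk_step_wt_def PP_def)
next
  case False
  with assms have cb: "c \<le> b" by simp
  define Q where "Q = (\<Prod>j\<in>{c..<b}. 1 - complex_of_real ((cmod (a j))\<^sup>2))"
  define X where "X = cnj (aext a (int c - 1))"
  have sq: "complex_of_real ((cmod (a b))\<^sup>2) = a b * cnj (a b)"
    by (rule complex_norm_square)
  have sq': "(complex_of_real (cmod (a b)))\<^sup>2 = a b * cnj (a b)"
    using complex_norm_square[of "a b"] by (simp only: of_real_power)
  have ab: "cnj (a b) \<noteq> 0" using nz by simp
  have e1: "PP a (Suc b) c = X / cnj (a b) * (Q * (1 - a b * cnj (a b)))"
    using PP_closed[OF nz, of c "Suc b"] cb
    by (simp add: X_def Q_def prod.atLeastLessThan_Suc sq sq')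
  have e2: "PP a b c = X / cnj (aext a (int b - 1)) * Q"
    using PP_closed[OF nz cb] by (simp add: X_def Q_def)
  have e3: "luk_step_wt a b c = - a b * X * Q"
    using cb by (simp add: luk_step_wt_def X_def Q_def)
  show ?thesis
    using cb aext_nz[OF nz, of b] ab
    by (simp add: e1 e2 e3 hw_def field_simps)
qed

theorem proposition3p11:
  fixes a :: "nat \<Rightarrow> complex" and n r s :: nat
  assumes "\<forall>m. 0 < cmod (a m) \<and> cmod (a m) < 1"
  shows "(\<Sum>p\<in>sch_paths n r s. sch_wt a r p) = (\<Sum>q\<in>luk_paths n r s. luk_wt a q)"
proof -
  have nz: "\<forall>m. a m \<noteq> 0" using assms by (metis norm_zero less_irrefl)
  show ?thesis
  proof (induction n arbitrary: r)
    case 0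
    then show ?case by (simp add: sch_paths_0 luk_paths_0 luk_wt_def)
  next
    case (Suc n b)
    define L where "L c = (\<Sum>q\<in>luk_paths n c s. luk_wt a q)" for c
    have IH: "(\<Sum>p\<in>sch_paths n c s. sch_wt a c p) = L c" for c using Suc.IH by (simp add: L_def)
    have "(\<Sum>p\<in>sch_paths (Suc n) b s. sch_wt a b p) =
       (\<Sum>c\<le>Suc b. PP a (Suc b) c * L c) + hw a b * (\<Sum>c\<le>b. PP a b c * L c)"
      by (simp add: SB_Suc SA_closed IH)
    also have "hw a b * (\<Sum>c\<le>b. PP a b c * L c) =
       (\<Sum>c\<le>Suc b. (if c \<le> b then hw a b * PP a b c else 0) * L c)"
      by (simp add: sum_distrib_left mult.assoc)
    also have "(\<Sum>c\<le>Suc b. PP a (Suc b) c * L c) + \<dots> =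
       (\<Sum>c\<le>Suc b. (PP a (Suc b) c + (if c \<le> b then hw a b * PP a b c else 0)) * L c)"
      by (simp add: sum.distrib distrib_right)
    also have "\<dots> = (\<Sum>c\<le>Suc b. luk_step_wt a b c * L c)"
      by (rule sum.cong) (simp_all add: step_eq[OF nz])
    also have "\<dots> = (\<Sum>q\<in>luk_paths (Suc n) b s. luk_wt a q)"
      by (simp add: L_Suc L_def)
    finally show ?case .
  qed
qed

end
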